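(* Let $\mathcal H$ be a complex Hilbert space and $\mathbf T=(T_1,\dots,T_n)\in B(\mathcal H)^n$ a doubly commuting $n$-tuple such that each $T_j$ has Property (1) (see context). If $z=(z_1,\dots,z_n)\in\sigma_T(\mathbf T)$, then there exist unit vectors $y_m\in\mathcal H$ such that $(T_j-z_j)^*y_m\to0$ as $m\to\infty$ for all $j=1,\dots,n$; that is, $\overline z=(\overline{z_1},\dots,\overline{z_n})$ belongs to the joint approximate point spectrum of $\mathbf T^*=(T_1^*,\dots,T_n^* )$.
   Context: Doubly commuting: $T_iT_j=T_jT_i$ and $T_i^*T_j=T_jT_i^*$ for $i\ne j$. Property (1) for an operator $T$: for every $z\in\mathbb C$ and every sequence $\{x_m\}$ of unit vectors, $(T-z)x_m\to0$ implies $(T-z)^*x_m\to0$. $\sigma_T$ denotes the Taylor spectrum: $z\in\sigma_T(\mathbf T)$ iff the Koszul complex of $(T_1-z_1,\dots,T_n-z_n)$ is not exact, where for a commuting tuple $\mathbf A$ the Koszul complex is $0\to E^n_n(\mathcal H)\xrightarrow{D_n}\cdots\xrightarrow{D_1}E^n_0(\mathcal H)\to0$ with $E^n_k(\mathcal H)=\mathcal H\otimes E^n_k$ ($E^n$ the exterior algebra on $e_1,\dots,e_n$) and $D_k(x\otimes e_{j_1}\wedge\cdots\wedge e_{j_k})=\sum_{i=1}^k(-1)^{i-1}A_{j_i}x\otimes e_{j_1}\wedge\cdots\wedge\check e_{j_i}\wedge\cdots\wedge e_{j_k}$. The joint approximate point spectrum of $(A_1,\dots,A_n)$ is the set of $w\in\mathbb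 C^n$ for which there are unit vectors $x_m$ with $(A_j-w_j)x_m\to0$ for all $j$. *)

theory Defs
  imports "HOL-Analysis.Analysis"
begin

text \<open>A complex structure on a
  real vector space is given by an operator J (multiplication by the imaginary unit)
  with J (J x) = - x; complex scalar multiplication is then
  c \<cdot> x = Re c *R x + Im c *R J x.\<close>
definition complex_structure :: "('a::real_vector \<Rightarrow> 'a) \<Rightarrow> bool" where
  "complex_structure J \<longleftrightarrow> linear J \<and> (\<forall>x. J (J x) = - x)"

definition scC :: "('a::real_vector \<Rightarrow> 'a) \<Rightarrow> complex \<Rightarrow> 'a \<Rightarrow> 'a" where
  "scC J c x = Re c *\<^sub>R x + Im c *\<^sub>R J x"

definition complex_inner_product ::
    "('a::real_vector \<Rightarrow> 'a) \<Rightarrow> ('a \<Rightarrow> 'a \<Rightarrow> complex) \<Rightarrow> bool" where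
  "complex_inner_product J ip \<longleftrightarrow>
     complex_structure J \<and>
     (\<forall>x y z. ip (x + y) z = ip x z + ip y z) \<and>
     (\<forall>c x y. ip (scC J c x) y = c * ip x y) \<and>
     (\<forall>x y. ip y x = cnj (ip x y)) \<and>
     (\<forall>x. Re (ip x x) \<ge> 0 \<and> Im (ip x x) = 0) \<and>
     (\<forall>x. ip x x = 0 \<longrightarrow> x = 0)"

definition complex_hilbert :: "('a::banach \<Rightarrow> 'a) \<Rightarrow> ('a \<Rightarrow> 'a \<Rightarrow> complex) \<Rightarrow> bool" where
  "complex_hilbert J ip \<longleftrightarrow> complex_inner_product J ip \<and> (\<forall>x. norm x = sqrt (Re (ip x x)))"

definition bounded_clinear_op :: "('a::real_normed_vector \<Rightarrow> 'a) \<Rightarrow> ('a \<Rightarrow> 'a) \<Rightarrow> bool" where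
  "bounded_clinear_op J T \<longleftrightarrow> bounded_linear T \<and> (\<forall>c x. T (scC J c x) = scC J c (T x))"

definition adj :: "('a \<Rightarrow> 'a \<Rightarrow> complex) \<Rightarrow> ('a \<Rightarrow> 'a) \<Rightarrow> 'a \<Rightarrow> 'a" where
  "adj ip T = (\<lambda>y. THE z. \<forall>x. ip (T x) y = ip x z)"

definition shift :: "('a::real_vector \<Rightarrow> 'a) \<Rightarrow> ('a \<Rightarrow> 'a) \<Rightarrow> complex \<Rightarrow> 'a \<Rightarrow> 'a" where
  "shift J T z = (\<lambda>x. T x - scC J z x)"

definition property1 :: "('a::real_normed_vector \<Rightarrow> 'a) \<Rightarrow> ('a \<Rightarrow> 'a \<Rightarrow> complex) \<Rightarrow> ('a \<Rightarrow> 'a) \<Rightarrow> bool" where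
  "property1 J ip T \<longleftrightarrow>
     (\<forall>z (x::nat \<Rightarrow> 'a). (\<forall>m. norm (x m) = 1) \<longrightarrow>
        (\<lambda>m. shift J T z (x m)) \<longlonglongrightarrow> 0 \<longrightarrow>
        (\<lambda>m. adj ip (shift J T z) (x m)) \<longlonglongrightarrow> 0)"

text \<open>Tuples (T_1,...,T_n) are indexed by j < n.\<close>
definition doubly_commuting :: "('a \<Rightarrow> 'a \<Rightarrow> complex) \<Rightarrow> nat \<Rightarrow> (nat \<Rightarrow> 'a \<Rightarrow> 'a) \<Rightarrow> bool" where
  "doubly_commuting ip n T \<longleftrightarrow>
     (\<forall>i<n. \<forall>j<n. i \<noteq> j \<longrightarrow>
        T i \<circ> T j = T j \<circ> T i \<and> adj ip (T i) \<circ> T j = T j \<circ> adj ip (T i))"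

text \<open>E^n_k(H) = H \<otimes> E^n_k is represented as the H-valued functions
  on k-element subsets of {0..<n} (the coefficient of e_{j_1}\<and>...\<and>e_{j_k},
  j_1<...<j_k). The differential
  D(x \<otimes> e_{j_1}\<and>...\<and>e_{j_k}) = \<Sum>_i (-1)^(i-1) A_{j_i} x \<otimes> (e_{j_i} omitted)
  becomes, coefficientwise, (D f) J = \<Sum>_{i\<notin>J} (-1)^{#{j\<in>J. j<i}} A_i (f (J \<union> {i})).\<close>
definition koszul_chains :: "nat \<Rightarrow> nat \<Rightarrow> (nat set \<Rightarrow> 'a::zero) set" where
  "koszul_chains n k = {f. \<forall>J. f J \<noteq> 0 \<longrightarrow> J \<subseteq> {..<n} \<and> card J = k}"

definition koszul_d :: "nat \<Rightarrow> (nat \<Rightarrow> 'a \<Rightarrow> 'a) \<Rightarrow> (nat set \<Rightarrow> 'a::real_vector) \<Rightarrow> nat set \<Rightarrow> 'a" where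
  "koszul_d n A f = (\<lambda>J. if J \<subseteq> {..<n}
      then (\<Sum>i\<in>{..<n} - J. ((-1::real) ^ card {j\<in>J. j < i}) *\<^sub>R A i (f (insert i J)))
      else 0)"

text \<open>Exactness at every degree k: ker D_k = ran D_{k+1} (D_0 = 0, and D_{n+1} = 0 since
  there are no (n+1)-subsets). On k-chains, koszul_d is D_k (for k = 0 it is 0).\<close>
definition koszul_exact :: "nat \<Rightarrow> (nat \<Rightarrow> 'a::real_vector \<Rightarrow> 'a) \<Rightarrow> bool" where
  "koszul_exact n A \<longleftrightarrow>
     (\<forall>k. {f \<in> koszul_chains n k. koszul_d n A f = (\<lambda>J. 0)}
            = koszul_d n A ` koszul_chains n (Suc k))"

definition taylor_spectrum :: "('a::real_vector \<Rightarrow> 'a) \<Rightarrow> nat \<Rightarrow> (nat \<Rightarrow> 'a \<Rightarrow> 'a) \<Rightarrow> (nat \<Rightarrow> complex) set" where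
  "taylor_spectrum J n T = {z. \<not> koszul_exact n (\<lambda>j. shift J (T j) (z j))}"

definition joint_approx_point_spectrum ::
    "('a::real_normed_vector \<Rightarrow> 'a) \<Rightarrow> nat \<Rightarrow> (nat \<Rightarrow> 'a \<Rightarrow> 'a) \<Rightarrow> (nat \<Rightarrow> complex) set" where
  "joint_approx_point_spectrum J n A =
     {w. \<exists>x::nat \<Rightarrow> 'a. (\<forall>m. norm (x m) = 1) \<and>
          (\<forall>j<n. (\<lambda>m. shift J (A j) (w j) (x m)) \<longlonglongrightarrow> 0)}"

end

theory Submission
  imports Defs
begin


definition sg :: "nat set \<Rightarrow> nat \<Rightarrow> real" where
  "sg S i = (-1::real) ^ card {j\<in>S. j < i}"

lemma sg_sq[simp]: "sg S i * sg S i = 1"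
  unfolding sg_def by (simp flip: power_add add: power_even_eq[symmetric] mult_2[symmetric])

lemma sg_insert: "finite S \<Longrightarrow> x \<notin> S \<Longrightarrow> sg (insert x S) i = (if x < i then - sg S i else sg S i)"
proof -
  assume f: "finite S" and x: "x \<notin> S"
  have e: "{j\<in>insert x S. j < i} = (if x < i then insert x {j\<in>S. j < i} else {j\<in>S. j < i})" by auto
  show ?thesis
  proof (cases "x < i")
    case True
    then show ?thesis using f x unfolding sg_def e by simp
  next
    case False
    then show ?thesis unfolding sg_def e by simp
  qed
qed

definition kE :: "nat \<Rightarrow> (nat \<Rightarrow> 'a \<Rightarrow> 'a) \<Rightarrow> (nat set \<Rightarrow> 'a::real_vector) \<Rightarrow> nat set \<Rightarrow> 'a" where
  "kE n B g = (\<lambda>K. if K \<subseteq> {..<n}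
      then (\<Sum>l\<in>K. sg (K - {l}) l *\<^sub>R B l (g (K - {l}))) else 0)"

lemma kd_eq: "koszul_d n A f = (\<lambda>J. if J \<subseteq> {..<n}
      then (\<Sum>i\<in>{..<n} - J. sg J i *\<^sub>R A i (f (insert i J))) else 0)"
  unfolding koszul_d_def sg_def by simp

lemma sum_antisym_zero:
  fixes t :: "nat \<Rightarrow> nat \<Rightarrow> 'a::real_vector"
  assumes "\<And>i l. i \<in> S \<Longrightarrow> l \<in> S \<Longrightarrow> t l i = - t i l"
  shows "(\<Sum>i\<in>S. \<Sum>l\<in>S. t i l) = 0"
proof -
  have "(\<Sum>i\<in>S. \<Sum>l\<in>S. t i l) = (\<Sum>l\<in>S. \<Sum>i\<in>S. t i l)" by (rule sum.swap)
  also have "\<dots> = (\<Sum>l\<in>S. \<Sum>i\<in>S. - t l i)" by (rule sum.cong[OF refl], rule sum.cong[OF refl]) (metis assms)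
  also have "\<dots> = - (\<Sum>i\<in>S. \<Sum>l\<in>S. t i l)" by (simp add: sum_negf)
  finally have "(\<Sum>i\<in>S. \<Sum>l\<in>S. t i l) + (\<Sum>i\<in>S. \<Sum>l\<in>S. t i l) = 0" by (metis right_minus)
  then have "(2::real) *\<^sub>R (\<Sum>i\<in>S. \<Sum>l\<in>S. t i l) = 0" by (simp add: scaleR_2)
  then show ?thesis by simp
qed

lemma kd_at: "J \<subseteq> {..<n} \<Longrightarrow> koszul_d n A f J = (\<Sum>i\<in>{..<n} - J. sg J i *\<^sub>R A i (f (insert i J)))"
  by (simp only: kd_eq if_True)

lemma kd_out: "\<not> J \<subseteq> {..<n} \<Longrightarrow> koszul_d n A f J = 0"
  by (simp add: kd_eq)

lemma dd_zero:
  fixes A :: "nat \<Rightarrow> 'a::real_vector \<Rightarrow> 'a"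
  assumes lin: "\<And>i. i < n \<Longrightarrow> linear (A i)"
    and comm: "\<And>i l x. i < n \<Longrightarrow> l < n \<Longrightarrow> i \<noteq> l \<Longrightarrow> A i (A l x) = A l (A i x)"
  shows "koszul_d n A (koszul_d n A f) = (\<lambda>J. 0)"
proof
  fix J
  show "koszul_d n A (koszul_d n A f) J = 0"
  proof (cases "J \<subseteq> {..<n}")
    case False then show ?thesis by (rule kd_out)
  next
    case True
    let ?S = "{..<n} - J"
    have fin: "finite J" using True finite_subset by blast
    define t where "t i l = (if i = l then 0 else (sg J i * sg (insert i J) l) *\<^sub>R A i (A l (f (insert l (insert i J)))))" for i l
    have "koszul_d n A (koszul_d n A f) J = (\<Sum>i\<in>?S. sg J i *\<^sub>R A i (koszul_d n A f (insert i J)))"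
      using True by (rule kd_at)
    also have "\<dots> = (\<Sum>i\<in>?S. \<Sum>l\<in>?S. t i l)"
    proof (rule sum.cong[OF refl])
      fix i assume i: "i \<in> ?S"
      have li: "linear (A i)" using i lin by auto
      have sub: "insert i J \<subseteq> {..<n}" using i True by auto
      have "sg J i *\<^sub>R A i (koszul_d n A f (insert i J))
          = sg J i *\<^sub>R A i (\<Sum>l\<in>{..<n} - insert i J. sg (insert i J) l *\<^sub>R A l (f (insert l (insert i J))))"
        by (simp only: kd_at[OF sub])
      also have "\<dots> = sg J i *\<^sub>R (\<Sum>l\<in>{..<n} - insert i J. sg (insert i J) l *\<^sub>R A i (A l (f (insert l (insert i J)))))"
        by (simp only: linear_sum[OF li] linear_scale[OF li] o_def)
      also have "\<dots> = (\<Sum>l\<in>{..<n} - insert i J. t i l)"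
        unfolding scaleR_sum_right scaleR_scaleR t_def by (rule sum.cong) auto
      also have "\<dots> = (\<Sum>l\<in>?S. t i l)"
        by (rule sum.mono_neutral_left) (auto simp: t_def)
      finally show "sg J i *\<^sub>R A i (koszul_d n A f (insert i J)) = (\<Sum>l\<in>?S. t i l)" .
    qed
    also have "\<dots> = 0"
    proof (rule sum_antisym_zero)
      fix i l assume i: "i \<in> ?S" and l: "l \<in> ?S"
      show "t l i = - t i l"
      proof (cases "i = l")
        case True then show ?thesis by (simp add: t_def)
      next
        case False
        have e: "insert l (insert i J) = insert i (insert l J)" by blast
        have s1: "sg (insert l J) i = (if l < i then - sg J i else sg J i)" using l fin sg_insert by blast
        have s2: "sg (insert i J) l = (if i < l then - sg J l else sg J l)" using i fin sg_insert by blast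
        have c: "A l (A i (f (insert i (insert l J)))) = A i (A l (f (insert l (insert i J))))"
          using comm[of i l] False i l unfolding e by simp
        show ?thesis using False unfolding t_def s1 s2 c by (cases "i < l") auto
      qed
    qed
    finally show ?thesis .
  qed
qed


lemma kE_at: "K \<subseteq> {..<n} \<Longrightarrow> kE n B g K = (\<Sum>l\<in>K. sg (K - {l}) l *\<^sub>R B l (g (K - {l})))"
  by (simp only: kE_def if_True)

lemma kE_out: "\<not> K \<subseteq> {..<n} \<Longrightarrow> kE n B g K = 0"
  by (simp add: kE_def)

lemma lap_id:
  fixes A B :: "nat \<Rightarrow> 'a::real_vector \<Rightarrow> 'a"
  assumes linA: "\<And>i. i < n \<Longrightarrow> linear (A i)"
    and linB: "\<And>i. i < n \<Longrightarrow> linear (B i)"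
    and comm: "\<And>i l x. i < n \<Longrightarrow> l < n \<Longrightarrow> i \<noteq> l \<Longrightarrow> B l (A i x) = A i (B l x)"
    and JJ: "J \<subseteq> {..<n}"
  shows "koszul_d n A (kE n B g) J + kE n B (koszul_d n A g) J
    = (\<Sum>i\<in>{..<n} - J. A i (B i (g J))) + (\<Sum>l\<in>J. B l (A l (g J)))"
proof -
  let ?S = "{..<n} - J"
  have fin: "finite J" using JJ finite_subset by blast
  define h where "h i l = g (insert i (J - {l}))" for i l
  define c1 where "c1 i l = sg J i * sg (insert i (J - {l})) l" for i l
  define X where "X = (\<Sum>i\<in>?S. \<Sum>l\<in>J. c1 i l *\<^sub>R A i (B l (h i l)))"
  have D1: "koszul_d n A (kE n B g) J = (\<Sum>i\<in>?S. A i (B i (g J))) + X"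
  proof -
    have "koszul_d n A (kE n B g) J = (\<Sum>i\<in>?S. sg J i *\<^sub>R A i (kE n B g (insert i J)))"
      using JJ by (rule kd_at)
    also have "\<dots> = (\<Sum>i\<in>?S. A i (B i (g J)) + (\<Sum>l\<in>J. c1 i l *\<^sub>R A i (B l (h i l))))"
    proof (rule sum.cong[OF refl])
      fix i assume i: "i \<in> ?S"
      have li: "linear (A i)" using i linA by auto
      have sub: "insert i J \<subseteq> {..<n}" using i JJ by auto
      have iJ: "i \<notin> J" using i by auto
      have e1: "insert i J - {i} = J" using iJ by auto
      have e2: "\<And>l. l \<in> J \<Longrightarrow> insert i J - {l} = insert i (J - {l})" using iJ by auto
      have "kE n B g (insert i J) = (\<Sum>l\<in>insert i J. sg (insert i J - {l}) l *\<^sub>R B l (g (insert i J - {l})))"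
        using sub by (rule kE_at)
      also have "\<dots> = sg J i *\<^sub>R B i (g J) + (\<Sum>l\<in>J. sg (insert i (J - {l})) l *\<^sub>R B l (h i l))"
        using fin iJ by (simp add: e1 e2 h_def)
      finally have "sg J i *\<^sub>R A i (kE n B g (insert i J))
          = sg J i *\<^sub>R A i (sg J i *\<^sub>R B i (g J) + (\<Sum>l\<in>J. sg (insert i (J - {l})) l *\<^sub>R B l (h i l)))"
        by simp
      also have "\<dots> = (sg J i * sg J i) *\<^sub>R A i (B i (g J)) + (\<Sum>l\<in>J. (sg J i * sg (insert i (J - {l})) l) *\<^sub>R A i (B l (h i l)))"
        by (simp only: linear_add[OF li] linear_sum[OF li] linear_scale[OF li] o_def scaleR_add_right scaleR_sum_right scaleR_scaleR)
      also have "\<dots> = A i (B i (g J)) + (\<Sum>l\<in>J. c1 i l *\<^sub>R A i (B l (h i l)))"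
        by (simp add: c1_def)
      finally show "sg J i *\<^sub>R A i (kE n B g (insert i J)) = A i (B i (g J)) + (\<Sum>l\<in>J. c1 i l *\<^sub>R A i (B l (h i l)))" .
    qed
    also have "\<dots> = (\<Sum>i\<in>?S. A i (B i (g J))) + X"
      by (simp add: sum.distrib X_def)
    finally show ?thesis .
  qed
  have D2: "kE n B (koszul_d n A g) J = (\<Sum>l\<in>J. B l (A l (g J))) - X"
  proof -
    have "kE n B (koszul_d n A g) J = (\<Sum>l\<in>J. sg (J - {l}) l *\<^sub>R B l (koszul_d n A g (J - {l})))"
      using JJ by (rule kE_at)
    also have "\<dots> = (\<Sum>l\<in>J. B l (A l (g J)) - (\<Sum>i\<in>?S. c1 i l *\<^sub>R A i (B l (h i l))))"
    proof (rule sum.cong[OF refl])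
      fix l assume l: "l \<in> J"
      have ln: "l < n" using l JJ by auto
      have lb: "linear (B l)" using ln linB by auto
      have sub: "J - {l} \<subseteq> {..<n}" using JJ by auto
      have e1: "{..<n} - (J - {l}) = insert l ?S" using l ln by auto
      have lS: "l \<notin> ?S" using l by auto
      have e2: "insert l (J - {l}) = J" using l by auto
      have fl: "finite (J - {l})" using fin by auto
      have sgJ: "\<And>i. i \<in> ?S \<Longrightarrow> sg J i = (if l < i then - sg (J - {l}) i else sg (J - {l}) i)"
        using sg_insert[OF fl, of l] e2 by auto
      have sgI: "\<And>i. i \<in> ?S \<Longrightarrow> sg (insert i (J - {l})) l = (if i < l then - sg (J - {l}) l else sg (J - {l}) l)"
        using sg_insert[OF fl] by auto
      have cc: "\<And>i. i \<in> ?S \<Longrightarrow> sg (J - {l}) l * sg (J - {l}) i = - c1 i l"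
      proof -
        fix i assume i: "i \<in> ?S"
        have "i \<noteq> l" using i l by auto
        then show "sg (J - {l}) l * sg (J - {l}) i = - c1 i l"
          unfolding c1_def sgJ[OF i] sgI[OF i] by (cases "i < l") auto
      qed
      have "koszul_d n A g (J - {l}) = (\<Sum>i\<in>insert l ?S. sg (J - {l}) i *\<^sub>R A i (g (insert i (J - {l}))))"
        using kd_at[OF sub, of A g] unfolding e1 .
      also have "\<dots> = sg (J - {l}) l *\<^sub>R A l (g J) + (\<Sum>i\<in>?S. sg (J - {l}) i *\<^sub>R A i (h i l))"
        using lS by (simp add: e2 h_def insert_absorb[OF l])
      finally have "sg (J - {l}) l *\<^sub>R B l (koszul_d n A g (J - {l}))
         = sg (J - {l}) l *\<^sub>R B l (sg (J - {l}) l *\<^sub>R A l (g J) + (\<Sum>i\<in>?S. sg (J - {l}) i *\<^sub>R A i (h i l)))"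
        by simp
      also have "\<dots> = (sg (J - {l}) l * sg (J - {l}) l) *\<^sub>R B l (A l (g J)) + (\<Sum>i\<in>?S. (sg (J - {l}) l * sg (J - {l}) i) *\<^sub>R B l (A i (h i l)))"
        by (simp only: linear_add[OF lb] linear_sum[OF lb] linear_scale[OF lb] o_def scaleR_add_right scaleR_sum_right scaleR_scaleR)
      also have "\<dots> = B l (A l (g J)) + (\<Sum>i\<in>?S. (- c1 i l) *\<^sub>R A i (B l (h i l)))"
      proof -
        have "(\<Sum>i\<in>?S. (sg (J - {l}) l * sg (J - {l}) i) *\<^sub>R B l (A i (h i l))) = (\<Sum>i\<in>?S. (- c1 i l) *\<^sub>R A i (B l (h i l)))"
        proof (rule sum.cong[OF refl])
          fix i assume i: "i \<in> ?S"
          have "i \<noteq> l" "i < n" using i l by auto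
          then show "(sg (J - {l}) l * sg (J - {l}) i) *\<^sub>R B l (A i (h i l)) = (- c1 i l) *\<^sub>R A i (B l (h i l))"
            using cc[OF i] comm[of i l] ln by simp
        qed
        then show ?thesis by simp
      qed
      also have "\<dots> = B l (A l (g J)) - (\<Sum>i\<in>?S. c1 i l *\<^sub>R A i (B l (h i l)))"
        by (simp add: sum_negf)
      finally show "sg (J - {l}) l *\<^sub>R B l (koszul_d n A g (J - {l})) = B l (A l (g J)) - (\<Sum>i\<in>?S. c1 i l *\<^sub>R A i (B l (h i l)))" .
    qed
    also have "\<dots> = (\<Sum>l\<in>J. B l (A l (g J))) - (\<Sum>l\<in>J. \<Sum>i\<in>?S. c1 i l *\<^sub>R A i (B l (h i l)))"
      by (simp add: sum_subtractf)
    also have "(\<Sum>l\<in>J. \<Sum>i\<in>?S. c1 i l *\<^sub>R A i (B l (h i l))) = X"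
      unfolding X_def by (rule sum.swap)
    finally show ?thesis .
  qed
  show ?thesis using D1 D2 by simp
qed


lemma kd_add:
  assumes linA: "\<And>i. i < n \<Longrightarrow> linear (A i)"
  shows "koszul_d n A (\<lambda>J. u J + v J) J = koszul_d n A u J + koszul_d n A v J"
proof (cases "J \<subseteq> {..<n}")
  case True
  have "\<And>i. i \<in> {..<n} - J \<Longrightarrow> sg J i *\<^sub>R A i (u (insert i J) + v (insert i J)) = sg J i *\<^sub>R A i (u (insert i J)) + sg J i *\<^sub>R A i (v (insert i J))"
    using linA by (simp add: linear_add scaleR_add_right)
  then show ?thesis using True by (simp add: kd_at sum.distrib)
qed (simp add: kd_out)

lemma kE_zero:
  assumes linB: "\<And>i. i < n \<Longrightarrow> linear (B i)"
  shows "kE n B (\<lambda>J. 0) K = 0"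
proof (cases "K \<subseteq> {..<n}")
  case True
  have "\<And>l. l \<in> K \<Longrightarrow> B l 0 = 0" using True linB linear_0 by blast
  then show ?thesis using True by (simp add: kE_at)
qed (simp add: kE_out)

lemma kd_chain:
  assumes linA: "\<And>i. i < n \<Longrightarrow> linear (A i)"
  assumes "h \<in> koszul_chains n (Suc k)"
  shows "koszul_d n A h \<in> koszul_chains n k"
  unfolding koszul_chains_def
proof (intro CollectI allI impI)
  fix J assume nz: "koszul_d n A h J \<noteq> 0"
  then have JJ: "J \<subseteq> {..<n}" using kd_out by blast
  have fin: "finite J" using JJ finite_subset by blast
  have "card J = k"
  proof (rule ccontr)
    assume ck: "card J \<noteq> k"
    have "\<And>i. i \<in> {..<n} - J \<Longrightarrow> h (insert i J) = 0"
    proof -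
      fix i assume i: "i \<in> {..<n} - J"
      have "card (insert i J) \<noteq> Suc k" using i fin ck by simp
      then show "h (insert i J) = 0" using assms(2) unfolding koszul_chains_def by blast
    qed
    then have "\<And>i. i \<in> {..<n} - J \<Longrightarrow> sg J i *\<^sub>R A i (h (insert i J)) = 0"
      using linA linear_0 by (metis DiffD1 lessThan_iff scaleR_zero_right)
    then have "koszul_d n A h J = 0" unfolding kd_at[OF JJ] by (intro sum.neutral) blast
    then show False using nz by simp
  qed
  then show "J \<subseteq> {..<n} \<and> card J = k" using JJ by simp
qed


lemma kE_chain:
  assumes linB: "\<And>i. i < n \<Longrightarrow> linear (B i)"
  assumes g: "g \<in> koszul_chains n k"
  shows "kE n B g \<in> koszul_chains n (Suc k)"
  unfolding koszul_chains_def
proof (intro CollectI allI impI)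
  fix K assume nz: "kE n B g K \<noteq> 0"
  then have KK: "K \<subseteq> {..<n}" using kE_out by blast
  have fin: "finite K" using KK finite_subset by blast
  have "\<exists>l\<in>K. g (K - {l}) \<noteq> 0"
  proof (rule ccontr)
    assume "\<not> (\<exists>l\<in>K. g (K - {l}) \<noteq> 0)"
    then have "\<And>l. l \<in> K \<Longrightarrow> sg (K - {l}) l *\<^sub>R B l (g (K - {l})) = 0"
      using linB linear_0 KK by (metis lessThan_iff scaleR_zero_right subsetD)
    then have "kE n B g K = 0" unfolding kE_at[OF KK] by (intro sum.neutral) blast
    then show False using nz by simp
  qed
  then obtain l where l: "l \<in> K" and gl: "g (K - {l}) \<noteq> 0" by blast
  have "card (K - {l}) = k" using g gl unfolding koszul_chains_def by blast
  then have "card K = Suc k" using l fin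
    by (metis card_Diff_singleton card_gt_0_iff Suc_pred' empty_iff)
  then show "K \<subseteq> {..<n} \<and> card K = Suc k" using KK by simp
qed

lemma exact_from_lap:
  fixes A B :: "nat \<Rightarrow> 'a::real_vector \<Rightarrow> 'a"
  assumes linA: "\<And>i. i < n \<Longrightarrow> linear (A i)"
    and linB: "\<And>i. i < n \<Longrightarrow> linear (B i)"
    and commA: "\<And>i l x. i < n \<Longrightarrow> l < n \<Longrightarrow> i \<noteq> l \<Longrightarrow> A i (A l x) = A l (A i x)"
    and comm: "\<And>i l x. i < n \<Longrightarrow> l < n \<Longrightarrow> i \<noteq> l \<Longrightarrow> B l (A i x) = A i (B l x)"
    and bj: "\<And>S. S \<subseteq> {..<n} \<Longrightarrow> bij (\<lambda>x. (\<Sum>i\<in>{..<n} - S. A i (B i x)) + (\<Sum>l\<in>S. B l (A l x)))"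
  shows "koszul_exact n A"
  unfolding koszul_exact_def
proof
  fix k
  define L where "L S x = (\<Sum>i\<in>{..<n} - S. A i (B i x)) + (\<Sum>l\<in>S. B l (A l x))" for S x
  have L0: "L S 0 = 0" if "S \<subseteq> {..<n}" for S
  proof -
    have "\<And>i. i \<in> {..<n} - S \<Longrightarrow> A i (B i 0) = 0" using linA linB linear_0 by (metis DiffD1 lessThan_iff)
    moreover have "\<And>l. l \<in> S \<Longrightarrow> B l (A l 0) = 0" using linA linB linear_0 that by (metis lessThan_iff subsetD)
    ultimately show ?thesis unfolding L_def by simp
  qed
  have bjL: "bij (L S)" if "S \<subseteq> {..<n}" for S using bj[OF that] unfolding L_def[abs_def] .
  have lap: "koszul_d n A (kE n B g) S + kE n B (koszul_d n A g) S = L S (g S)" if "S \<subseteq> {..<n}" for g S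
    unfolding L_def by (rule lap_id[of n A B, OF linA linB comm that])
  show "{f \<in> koszul_chains n k. koszul_d n A f = (\<lambda>J. 0)} = koszul_d n A ` koszul_chains n (Suc k)"
  proof
    show "koszul_d n A ` koszul_chains n (Suc k) \<subseteq> {f \<in> koszul_chains n k. koszul_d n A f = (\<lambda>J. 0)}"
      using kd_chain[of n A, OF linA] dd_zero[of n A, OF linA commA] by blast
  next
    show "{f \<in> koszul_chains n k. koszul_d n A f = (\<lambda>J. 0)} \<subseteq> koszul_d n A ` koszul_chains n (Suc k)"
    proof
      fix f assume "f \<in> {f \<in> koszul_chains n k. koszul_d n A f = (\<lambda>J. 0)}"
      then have fc: "f \<in> koszul_chains n k" and df: "koszul_d n A f = (\<lambda>J. 0)" by auto
      have fout: "f S = 0" if "\<not> S \<subseteq> {..<n}" for S using fc that unfolding koszul_chains_def by blast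
      define g where "g S = (if S \<subseteq> {..<n} then inv (L S) (f S) else 0)" for S
      have Lg: "L S (g S) = f S" if "S \<subseteq> {..<n}" for S
        using bjL[OF that] that unfolding g_def by (simp add: bij_is_surj surj_f_inv_f)
      have gc: "g \<in> koszul_chains n k"
        unfolding koszul_chains_def
      proof (intro CollectI allI impI)
        fix S assume nz: "g S \<noteq> 0"
        then have SS: "S \<subseteq> {..<n}" unfolding g_def by presburger
        have "f S \<noteq> 0"
        proof
          assume "f S = 0"
          then have "L S (g S) = L S 0" using Lg[OF SS] L0[OF SS] by simp
          then have "g S = 0" using bjL[OF SS] unfolding bij_def inj_def by blast
          then show False using nz by simp
        qed
        then show "S \<subseteq> {..<n} \<and> card S = k" using fc unfolding koszul_chains_def by blast
      qed
      have fdec: "f = (\<lambda>S. koszul_d n A (kE n B g) S + kE n B (koszul_d n A g) S)"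
      proof
        fix S show "f S = koszul_d n A (kE n B g) S + kE n B (koszul_d n A g) S"
        proof (cases "S \<subseteq> {..<n}")
          case True then show ?thesis using lap[OF True, of g] Lg[OF True] by simp
        next
          case False then show ?thesis using fout[OF False] by (simp add: kd_out kE_out)
        qed
      qed
      have dedg: "koszul_d n A (kE n B (koszul_d n A g)) = (\<lambda>J. 0)"
      proof
        fix S
        have "0 = koszul_d n A f S" using df by simp
        also have "\<dots> = koszul_d n A (koszul_d n A (kE n B g)) S + koszul_d n A (kE n B (koszul_d n A g)) S"
          by (subst fdec) (rule kd_add[of n A, OF linA])
        also have "\<dots> = koszul_d n A (kE n B (koszul_d n A g)) S"
          using dd_zero[of n A, OF linA commA] by simp
        finally show "koszul_d n A (kE n B (koszul_d n A g)) S = 0" by simp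
      qed
      have dg: "koszul_d n A g = (\<lambda>J. 0)"
      proof
        fix S show "koszul_d n A g S = 0"
        proof (cases "S \<subseteq> {..<n}")
          case True
          have "L S (koszul_d n A g S) = koszul_d n A (kE n B (koszul_d n A g)) S + kE n B (koszul_d n A (koszul_d n A g)) S"
            using lap[OF True] by simp
          also have "\<dots> = 0" using dedg dd_zero[of n A, OF linA commA] kE_zero[of n B, OF linB] by simp
          also have "\<dots> = L S 0" using L0[OF True] by simp
          finally show ?thesis using bjL[OF True] unfolding bij_def inj_def by blast
        qed (simp add: kd_out)
      qed
      have "f = koszul_d n A (kE n B g)"
      proof
        fix S show "f S = koszul_d n A (kE n B g) S"
          using fdec dg kE_zero[of n B, OF linB] by (metis add.right_neutral)
      qed
      then show "f \<in> koszul_d n A ` koszul_chains n (Suc k)" using kE_chain[of n B, OF linB gc] by blast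
    qed
  qed
qed



locale chs =
  fixes J :: "'a::banach \<Rightarrow> 'a" and ip :: "'a \<Rightarrow> 'a \<Rightarrow> complex"
  assumes ch: "complex_hilbert J ip"
begin

definition r :: "'a \<Rightarrow> 'a \<Rightarrow> real" where "r x y = Re (ip x y)"

lemma cip: "complex_inner_product J ip" using ch unfolding complex_hilbert_def by (rule conjunct1)
lemma cstr: "complex_structure J" using cip unfolding complex_inner_product_def by (rule conjunct1)

lemma ip_add_all: "\<forall>x y z. ip (x + y) z = ip x z + ip y z"
  using cip unfolding complex_inner_product_def by (elim conjE) assumption
lemma ip_sc_all: "\<forall>c x y. ip (scC J c x) y = c * ip x y"
  using cip unfolding complex_inner_product_def by (elim conjE) assumption
lemma ip_cnj_all: "\<forall>x y. ip y x = cnj (ip x y)"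
  using cip unfolding complex_inner_product_def by (elim conjE) assumption
lemma ip_self_all: "\<forall>x. Re (ip x x) \<ge> 0 \<and> Im (ip x x) = 0"
  using cip unfolding complex_inner_product_def by (elim conjE) assumption
lemma ip_add: "ip (x + y) z = ip x z + ip y z" using ip_add_all by blast
lemma ip_sc: "ip (scC J c x) y = c * ip x y" using ip_sc_all by blast
lemma ip_cnj: "ip y x = cnj (ip x y)" using ip_cnj_all by blast
lemma ip_self: "Re (ip x x) \<ge> 0" "Im (ip x x) = 0" using ip_self_all by blast+
lemma norm_ip: "norm x = sqrt (Re (ip x x))"
  using ch unfolding complex_hilbert_def by blast
lemma J_lin: "linear J"
  using cstr unfolding complex_structure_def by auto
lemma JJ[simp]: "J (J x) = - x"
  using cstr unfolding complex_structure_def by auto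

lemma J_add: "J (x + y) = J x + J y" using J_lin by (simp add: linear_add)
lemma J_scale: "J (a *\<^sub>R x) = a *\<^sub>R J x" using J_lin by (simp add: linear_scale)
lemma J_diff: "J (x - y) = J x - J y" using J_lin by (simp add: linear_diff)
lemma J_neg: "J (- x) = - J x" using J_lin by (simp add: linear_neg)
lemma J_0[simp]: "J 0 = 0" using J_lin by (simp add: linear_0)

lemma scC_real: "scC J (complex_of_real a) x = a *\<^sub>R x"
  by (simp add: scC_def)
lemma scC_i: "scC J \<i> x = J x"
  by (simp add: scC_def)

lemma r_add_left: "r (x + y) z = r x z + r y z"
  by (simp add: r_def ip_add)
lemma r_sym: "r y x = r x y"
  unfolding r_def by (subst ip_cnj) simp
lemma r_add_right: "r z (x + y) = r z x + r z y"
  using r_add_left[of x y z] r_sym[of z "x + y"] r_sym[of z x] r_sym[of z y] by simp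
lemma r_scale_left: "r (a *\<^sub>R x) y = a * r x y"
  unfolding r_def using ip_sc[of "complex_of_real a" x y] by (simp add: scC_real)
lemma r_scale_right: "r y (a *\<^sub>R x) = a * r y x"
  using r_scale_left[of a x y] r_sym[of y "a *\<^sub>R x"] r_sym[of y x] by simp
lemma r_self: "r x x = (norm x)\<^sup>2"
  unfolding r_def norm_ip using ip_self(1)[of x] by simp
lemma r_zero_left[simp]: "r 0 y = 0"
  using r_scale_left[of 0 y y] by simp
lemma r_zero_right[simp]: "r y 0 = 0"
  using r_zero_left[of y] r_sym[of y 0] by simp
lemma r_neg_left: "r (- x) y = - r x y"
  using r_scale_left[of "-1" x y] by simp
lemma r_diff_left: "r (x - y) z = r x z - r y z"
  using r_add_left[of x "- y" z] r_neg_left by simp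
lemma r_neg_right: "r y (- x) = - r y x"
  using r_neg_left[of x y] r_sym[of y "- x"] r_sym[of y x] by simp
lemma r_diff_right: "r z (x - y) = r z x - r z y"
  using r_diff_left[of x y z] r_sym[of z "x - y"] r_sym[of z x] r_sym[of z y] by simp

lemma r_cs: "\<bar>r x y\<bar> \<le> norm x * norm y"
proof (cases "y = 0")
  case True then show ?thesis by simp
next
  case False
  then have ny: "(norm y)\<^sup>2 > 0" by simp
  define t where "t = r x y / (norm y)\<^sup>2"
  have "0 \<le> r (x - t *\<^sub>R y) (x - t *\<^sub>R y)" using r_self by simp
  also have "\<dots> = r x x - 2 * t * r x y + t * t * r y y"
    by (simp add: r_diff_left r_diff_right r_scale_left r_scale_right r_sym[of x y] algebra_simps)
  also have "\<dots> = (norm x)\<^sup>2 - (r x y)\<^sup>2 / (norm y)\<^sup>2"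
    using ny by (simp add: r_self t_def field_simps power2_eq_square)
  finally have "(r x y)\<^sup>2 \<le> (norm x)\<^sup>2 * (norm y)\<^sup>2"
    using ny by (simp add: field_simps)
  then have "(\<bar>r x y\<bar>)\<^sup>2 \<le> (norm x * norm y)\<^sup>2" by (simp add: power_mult_distrib)
  then show ?thesis by (rule power2_le_imp_le) simp
qed

lemma r_bb: "bounded_bilinear r"
proof
  show "\<exists>K. \<forall>a b. norm (r a b) \<le> norm a * norm b * K"
    using r_cs by (intro exI[of _ 1]) simp
qed (simp_all add: r_add_left r_add_right r_scale_left r_scale_right)

lemma r_J: "r (J x) y = - r x (J y)"
proof -
  have a: "ip (J x) y = \<i> * ip x y" using ip_sc[of \<i> x y] by (simp add: scC_i)
  have b: "ip x (J y) = - \<i> * ip x y"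
  proof -
    have "ip x (J y) = cnj (ip (J y) x)" by (rule ip_cnj)
    also have "ip (J y) x = \<i> * ip y x" using ip_sc[of \<i> y x] by (simp add: scC_i)
    also have "ip y x = cnj (ip x y)" by (rule ip_cnj)
    finally show ?thesis by simp
  qed
  show ?thesis unfolding r_def a b by simp
qed

lemma ip_decomp: "ip x y = Complex (r x y) (r x (J y))"
proof -
  have b: "ip x (J y) = - \<i> * ip x y"
  proof -
    have "ip x (J y) = cnj (ip (J y) x)" by (rule ip_cnj)
    also have "ip (J y) x = \<i> * ip y x" using ip_sc[of \<i> y x] by (simp add: scC_i)
    also have "ip y x = cnj (ip x y)" by (rule ip_cnj)
    finally show ?thesis by simp
  qed
  show ?thesis unfolding r_def b by (simp add: complex_eq_iff)
qed

lemma norm_J: "norm (J x) = norm x"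
proof -
  have "r (J x) (J x) = r x x" using r_J[of x "J x"] by (simp add: r_neg_right)
  then have "(norm (J x))\<^sup>2 = (norm x)\<^sup>2" by (simp only: r_self)
  then show ?thesis by (rule power2_eq_imp_eq) simp_all
qed

lemma J_bl: "bounded_linear J"
  by (rule bounded_linear_intro[of _ 1]) (simp_all add: J_add J_scale norm_J)

lemma r_eq: "(\<And>x. r x a = r x b) \<Longrightarrow> a = b"
proof -
  assume h: "\<And>x. r x a = r x b"
  have "r (a - b) (a - b) = 0" using h[of "a - b"] by (simp add: r_diff_right)
  then show "a = b" by (simp add: r_self)
qed


lemma norm_add_sq: "(norm (x + y))\<^sup>2 = (norm x)\<^sup>2 + 2 * r x y + (norm y)\<^sup>2"
  by (simp add: r_self[symmetric] r_add_left r_add_right r_sym[of y x])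

lemma parallelogram:
  fixes x y :: 'a
  shows "(norm (x + y))\<^sup>2 + (norm (x - y))\<^sup>2 = 2 * (norm x)\<^sup>2 + 2 * (norm y)\<^sup>2"
  by (simp add: r_self[symmetric] r_add_left r_add_right r_diff_left r_diff_right r_sym[of y x])

lemma quad0:
  fixes a b :: real
  assumes h: "\<And>t. 0 \<le> 2 * t * a + t * t * b" and b: "b \<ge> 0"
  shows "a = 0"
proof -
  define t where "t = - a / (b + 1)"
  have b1: "b + 1 > 0" using b by simp
  have tb: "t * (b + 1) = - a" using b1 by (simp add: t_def)
  have "(2 * t * a + t * t * b) * (b + 1)\<^sup>2 = 2 * (t * (b + 1)) * a * (b + 1) + (t * (b + 1)) * (t * (b + 1)) * b"
    by (simp add: power2_eq_square algebra_simps)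
  also have "\<dots> = - a\<^sup>2 * (b + 2)" unfolding tb by (simp add: power2_eq_square algebra_simps)
  finally have "(2 * t * a + t * t * b) * (b + 1)\<^sup>2 = - a\<^sup>2 * (b + 2)" .
  moreover have "0 \<le> (2 * t * a + t * t * b) * (b + 1)\<^sup>2" using h[of t] by simp
  ultimately have "a\<^sup>2 * (b + 2) \<le> 0" by simp
  then have "a\<^sup>2 \<le> 0" using b by (simp add: mult_le_0_iff)
  then show ?thesis by simp
qed

lemma orth:
  assumes h: "\<And>t. norm p \<le> norm (p + t *\<^sub>R v)"
  shows "r p v = 0"
proof (rule quad0)
  fix t :: real
  have "(norm p)\<^sup>2 \<le> (norm (p + t *\<^sub>R v))\<^sup>2" using h[of t] by (simp add: power_mono)
  also have "\<dots> = (norm p)\<^sup>2 + 2 * r p (t *\<^sub>R v) + (norm (t *\<^sub>R v))\<^sup>2"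
    by (rule norm_add_sq)
  also have "\<dots> = (norm p)\<^sup>2 + 2 * (t * r p v) + t * t * (norm v)\<^sup>2"
    by (simp add: r_scale_right power_mult_distrib power2_eq_square)
  finally show "0 \<le> 2 * t * r p v + t * t * (norm v)\<^sup>2" by simp
qed simp

lemma min_norm:
  fixes C :: "'a set"
  assumes cl: "closed C" and ne: "C \<noteq> {}"
    and mid: "\<And>a b. a \<in> C \<Longrightarrow> b \<in> C \<Longrightarrow> (1/2) *\<^sub>R (a + b) \<in> C"
  shows "\<exists>p\<in>C. \<forall>c\<in>C. norm p \<le> norm c"
proof -
  define d where "d = Inf (norm ` C)"
  have bdd: "bdd_below (norm ` C)" by (rule bdd_belowI[of _ 0]) auto
  have dle: "d \<le> norm c" if "c \<in> C" for c unfolding d_def using bdd that by (simp add: cInf_lower)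
  have d0: "0 \<le> d" unfolding d_def using ne by (auto intro!: cInf_greatest)
  have ex: "\<exists>x\<in>C. norm x < d + 1 / real (Suc k)" for k
  proof (rule ccontr)
    assume "\<not> ?thesis"
    then have "\<forall>x\<in>C. d + 1 / real (Suc k) \<le> norm x" by auto
    then have "d + 1 / real (Suc k) \<le> Inf (norm ` C)" using ne by (intro cInf_greatest) auto
    then have "d + 1 / real (Suc k) \<le> d" unfolding d_def .
    then show False by simp
  qed
  then obtain x where xC: "\<And>k. x k \<in> C" and xn: "\<And>k. norm (x k) < d + 1 / real (Suc k)"
    by metis
  have par: "(norm (a - b))\<^sup>2 \<le> 2 * (norm a)\<^sup>2 + 2 * (norm b)\<^sup>2 - 4 * d\<^sup>2" if "a \<in> C" "b \<in> C" for a b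
  proof -
    have "d \<le> norm ((1/2) *\<^sub>R (a + b))" using dle mid that by blast
    then have "2 * d \<le> norm (a + b)" by simp
    then have "(2 * d)\<^sup>2 \<le> (norm (a + b))\<^sup>2" using d0 by (intro power_mono) auto
    then have "4 * d\<^sup>2 \<le> (norm (a + b))\<^sup>2" by (simp add: power_mult_distrib)
    then show ?thesis using parallelogram[of a b] by linarith
  qed
  have cau: "Cauchy x"
  proof (rule metric_CauchyI)
    fix e :: real assume e: "0 < e"
    define q where "q = min 1 ((e/2)\<^sup>2 / (8 * d + 4))"
    have q0: "q > 0" unfolding q_def using e d0 by simp
    obtain N where N: "N > 0" "inverse (real N) < q" using ex_inverse_of_nat_less[OF q0] by blast
    define M where "M = N - 1"
    have SM: "Suc M = N" using N(1) unfolding M_def by simp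
    have M: "inverse (real (Suc M)) < q" using N(2) unfolding SM .
    show "\<exists>M. \<forall>m\<ge>M. \<forall>n\<ge>M. dist (x m) (x n) < e"
    proof (intro exI allI impI)
      fix m n assume m: "m \<ge> M" and n: "n \<ge> M"
      have small: "1 / real (Suc k) < q" if "k \<ge> M" for k
      proof -
        have "1 / real (Suc k) \<le> 1 / real (Suc M)" using that by (simp add: frac_le)
        then show ?thesis using M by (simp add: inverse_eq_divide)
      qed
      have bm: "norm (x m) < d + q" using xn[of m] small[OF m] by linarith
      have bn: "norm (x n) < d + q" using xn[of n] small[OF n] by linarith
      have sm: "(norm (x m))\<^sup>2 \<le> (d + q)\<^sup>2" using bm by (intro power_mono) auto
      have sn: "(norm (x n))\<^sup>2 \<le> (d + q)\<^sup>2" using bn by (intro power_mono) auto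
      have "(norm (x m - x n))\<^sup>2 \<le> 4 * (d + q)\<^sup>2 - 4 * d\<^sup>2" using par[OF xC xC, of m n] sm sn by linarith
      also have "\<dots> = 8 * d * q + 4 * q * q" by (simp add: power2_eq_square algebra_simps)
      also have "\<dots> \<le> 8 * d * q + 4 * q" using q0 d0 unfolding q_def by (simp add: mult_left_le)
      also have "\<dots> = (8 * d + 4) * q" by (simp add: algebra_simps)
      also have "\<dots> \<le> (e/2)\<^sup>2"
      proof -
        have qle: "q \<le> (e/2)\<^sup>2 / (8 * d + 4)" unfolding q_def by simp
        have "(8 * d + 4) * q \<le> (8 * d + 4) * ((e/2)\<^sup>2 / (8 * d + 4))" using d0 qle by (intro mult_left_mono) auto
        also have "\<dots> = (e/2)\<^sup>2" using d0 by simp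
        finally show ?thesis .
      qed
      finally have "(norm (x m - x n))\<^sup>2 \<le> (e/2)\<^sup>2" .
      then have "norm (x m - x n) \<le> e/2" using e by (simp add: power2_le_iff_abs_le)
      then show "dist (x m) (x n) < e" using e by (simp add: dist_norm)
    qed
  qed
  then obtain p where xp: "x \<longlonglongrightarrow> p" using Cauchy_convergent_iff convergent_def by blast
  have pC: "p \<in> C" using closed_sequentially[OF cl xC xp] .
  have lim: "(\<lambda>k. d + 1 / real (Suc k)) \<longlonglongrightarrow> d"
  proof -
    have "(\<lambda>k. 1 / real (Suc k)) \<longlonglongrightarrow> 0" using LIMSEQ_Suc[OF lim_1_over_n] by simp
    from tendsto_add[OF tendsto_const[of d] this] show ?thesis by simp
  qed
  have "norm p \<le> d"
    using LIMSEQ_le[OF tendsto_norm[OF xp] lim] xn less_imp_le by blast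
  then show ?thesis using pC dle by (meson order.trans)
qed


lemma riesz:
  fixes \<phi> :: "'a \<Rightarrow> real"
  assumes bl: "bounded_linear \<phi>"
  shows "\<exists>z. \<forall>x. \<phi> x = r x z"
proof (cases "\<forall>x. \<phi> x = 0")
  case True then show ?thesis by (intro exI[of _ 0]) simp
next
  case False
  then obtain x0 where x0: "\<phi> x0 \<noteq> 0" by blast
  interpret bounded_linear \<phi> by (rule bl)
  define C where "C = {x. \<phi> x = 1}"
  have cl: "closed C" unfolding C_def
    by (rule closed_Collect_eq[OF linear_continuous_on[OF bl] continuous_on_const])
  have "(1 / \<phi> x0) *\<^sub>R x0 \<in> C" using x0 unfolding C_def by (simp add: scaleR)
  then have ne: "C \<noteq> {}" by blast
  have mid: "(1/2) *\<^sub>R (a + b) \<in> C" if "a \<in> C" "b \<in> C" for a b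
    using that unfolding C_def by (simp add: scaleR add)
  obtain w where wC: "w \<in> C" and wmin: "\<And>c. c \<in> C \<Longrightarrow> norm w \<le> norm c"
    using min_norm[OF cl ne mid] by blast
  have perp: "r w m = 0" if "\<phi> m = 0" for m
  proof (rule orth)
    fix t :: real
    have "w + t *\<^sub>R m \<in> C" using wC that unfolding C_def by (simp add: add scaleR)
    then show "norm w \<le> norm (w + t *\<^sub>R m)" by (rule wmin)
  qed
  have w0: "w \<noteq> 0" using wC unfolding C_def by (auto simp: zero)
  then have nw: "(norm w)\<^sup>2 > 0" by simp
  show ?thesis
  proof (intro exI allI)
    fix x
    have "\<phi> (x - \<phi> x *\<^sub>R w) = 0" using wC unfolding C_def by (simp add: diff scaleR)
    then have "r w (x - \<phi> x *\<^sub>R w) = 0" by (rule perp)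
    then have "r x w = \<phi> x * (norm w)\<^sup>2"
      by (simp add: r_diff_right r_scale_right r_self r_sym[of w x])
    then show "\<phi> x = r x ((1 / (norm w)\<^sup>2) *\<^sub>R w)"
      using nw by (simp add: r_scale_right)
  qed
qed

lemma adj_ex:
  assumes T: "bounded_linear T"
  shows "\<exists>S. bounded_linear S \<and> (\<forall>x y. r (T x) y = r x (S y))"
proof -
  interpret rb: bounded_bilinear r by (rule r_bb)
  have ex: "\<exists>z. \<forall>x. r (T x) y = r x z" for y
    by (rule riesz, rule bounded_linear_compose[OF rb.bounded_linear_left T])
  define S where "S y = (SOME z. \<forall>x. r (T x) y = r x z)" for y
  have hS: "r (T x) y = r x (S y)" for x y
    unfolding S_def using someI_ex[OF ex[of y]] by blast
  obtain K where K: "\<And>x. norm (T x) \<le> norm x * K" and K0: "K > 0"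
    using bounded_linear.pos_bounded[OF T] by blast
  have "bounded_linear S"
  proof (rule bounded_linear_intro[of _ K])
    fix a b show "S (a + b) = S a + S b"
      by (rule r_eq) (simp add: hS[symmetric] r_add_right)
  next
    fix c a show "S (c *\<^sub>R a) = c *\<^sub>R S a"
      by (rule r_eq) (simp add: hS[symmetric] r_scale_right)
  next
    fix y
    have "(norm (S y))\<^sup>2 = r (T (S y)) y" by (simp add: hS r_self)
    also have "\<dots> \<le> norm (T (S y)) * norm y" using r_cs by (metis abs_le_D1)
    also have "\<dots> \<le> norm (S y) * K * norm y" using K by (simp add: mult_right_mono)
    finally have h: "norm (S y) * norm (S y) \<le> norm (S y) * (K * norm y)" by (simp add: power2_eq_square algebra_simps)
    show "norm (S y) \<le> norm y * K"
    proof (cases "S y = 0")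
      case True then show ?thesis using K0 by simp
    next
      case False then show ?thesis using h by (simp add: algebra_simps)
    qed
  qed
  then show ?thesis using hS by blast
qed

lemma adj_J:
  assumes TJ: "\<And>x. T (J x) = J (T x)" and hS: "\<And>x y. r (T x) y = r x (S y)"
  shows "S (J y) = J (S y)"
proof (rule r_eq)
  fix x
  have "r x (S (J y)) = r (T x) (J y)" by (simp add: hS)
  also have "\<dots> = - r (J (T x)) y" by (simp add: r_J)
  also have "\<dots> = - r (T (J x)) y" by (simp add: TJ)
  also have "\<dots> = - r (J x) (S y)" by (simp add: hS)
  also have "\<dots> = r x (J (S y))" by (simp add: r_J)
  finally show "r x (S (J y)) = r x (J (S y))" .
qed

lemma adj_eq:
  assumes TJ: "\<And>x. T (J x) = J (T x)" and hS: "\<And>x y. r (T x) y = r x (S y)"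
  shows "adj ip T = S"
proof
  fix y
  have SJ: "S (J y) = J (S y)" by (rule adj_J[OF TJ hS])
  have all: "\<forall>x. ip (T x) y = ip x (S y)"
  proof
    fix x
    show "ip (T x) y = ip x (S y)"
      unfolding ip_decomp[of "T x"] ip_decomp[of x] by (simp add: hS SJ)
  qed
  show "adj ip T y = S y"
    unfolding adj_def
  proof (rule the_equality)
    show "\<forall>x. ip (T x) y = ip x (S y)" by (rule all)
  next
    fix z assume hz: "\<forall>x. ip (T x) y = ip x z"
    show "z = S y"
    proof (rule r_eq)
      fix x
      have "r x z = Re (ip (T x) y)" using hz by (simp add: r_def)
      also have "\<dots> = r x (S y)" using all by (simp add: r_def)
      finally show "r x z = r x (S y)" .
    qed
  qed
qed


lemma coercive_bij:
  assumes P: "bounded_linear P" and c: "c > 0" and co: "\<And>x. c * (norm x)\<^sup>2 \<le> r (P x) x"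
  shows "bij P"
proof -
  interpret bounded_linear P by (rule P)
  have bb: "c * norm x \<le> norm (P x)" for x
  proof (cases "x = 0")
    case True then show ?thesis by (simp add: zero)
  next
    case False
    have "c * (norm x)\<^sup>2 \<le> norm (P x) * norm x" using co[of x] r_cs[of "P x" x] by linarith
    then have "(c * norm x) * norm x \<le> norm (P x) * norm x" by (simp add: power2_eq_square algebra_simps)
    then show ?thesis using False by simp
  qed
  have inj: "inj P"
  proof (rule injI)
    fix x y assume "P x = P y"
    then have "P (x - y) = 0" by (simp add: diff)
    then have "c * norm (x - y) \<le> 0" using bb[of "x - y"] by simp
    then show "x = y" using c by (simp add: mult_le_0_iff)
  qed
  have clr: "closed (range P)"
    unfolding closed_sequential_limits
  proof (intro allI impI)
    fix x l assume h: "(\<forall>n. x n \<in> range P) \<and> x \<longlonglongrightarrow> l"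
    then have "\<forall>n. \<exists>v. x n = P v" by blast
    from choice[OF this] obtain u where u: "\<And>n. x n = P (u n)" by blast
    have cx: "Cauchy x" using h LIMSEQ_imp_Cauchy by blast
    have "Cauchy u"
    proof (rule CauchyI)
      fix e :: real assume e: "0 < e"
      obtain M where M: "\<And>m n. m \<ge> M \<Longrightarrow> n \<ge> M \<Longrightarrow> norm (x m - x n) < c * e"
        using CauchyD[OF cx, of "c * e"] c e by auto
      show "\<exists>M. \<forall>m\<ge>M. \<forall>n\<ge>M. norm (u m - u n) < e"
      proof (intro exI allI impI)
        fix m n assume "m \<ge> M" "n \<ge> M"
        then have "norm (x m - x n) < c * e" by (rule M)
        moreover have "c * norm (u m - u n) \<le> norm (x m - x n)" using bb[of "u m - u n"] by (simp add: u diff)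
        ultimately have "c * norm (u m - u n) < c * e" by linarith
        then show "norm (u m - u n) < e" using c by simp
      qed
    qed
    then obtain u0 where u0: "u \<longlonglongrightarrow> u0" using Cauchy_convergent_iff convergent_def by blast
    have "(\<lambda>n. P (u n)) \<longlonglongrightarrow> P u0" by (rule tendsto[OF u0])
    moreover have "x = (\<lambda>n. P (u n))" using u by blast
    ultimately have "x \<longlonglongrightarrow> P u0" by simp
    then have "l = P u0" using h LIMSEQ_unique by blast
    then show "l \<in> range P" by simp
  qed
  have surj: "surj P"
  proof -
    have "f \<in> range P" for f
    proof -
      define C where "C = (\<lambda>y. f - y) -` range P"
      have cl: "closed C" unfolding C_def
        by (rule continuous_closed_vimage[OF clr]) (intro continuous_intros)
      have "f \<in> C" unfolding C_def using rangeI[of P 0] by (simp add: zero)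
      then have ne: "C \<noteq> {}" by blast
      have mid: "(1/2) *\<^sub>R (a + b) \<in> C" if "a \<in> C" "b \<in> C" for a b
      proof -
        have "f - a \<in> range P" "f - b \<in> range P" using that unfolding C_def by auto
        then obtain ua ub where "f - a = P ua" "f - b = P ub" by blast
        note eqs = this
        have "f - (1/2) *\<^sub>R (a + b) = (1/2) *\<^sub>R (f - a) + (1/2) *\<^sub>R (f - b)"
          by (simp add: algebra_simps flip: scaleR_add_left)
        also have "\<dots> = P ((1/2) *\<^sub>R ua + (1/2) *\<^sub>R ub)" unfolding eqs by (simp add: add scaleR)
        finally have "f - (1/2) *\<^sub>R (a + b) = P ((1/2) *\<^sub>R ua + (1/2) *\<^sub>R ub)" .
        then show ?thesis unfolding C_def by simp
      qed
      obtain w where wC: "w \<in> C" and wmin: "\<And>y. y \<in> C \<Longrightarrow> norm w \<le> norm y"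
        using min_norm[OF cl ne mid] by blast
      obtain u0 where u0: "f - w = P u0" using wC unfolding C_def by auto
      have perp: "r w (P v) = 0" for v
      proof (rule orth)
        fix t :: real
        have "f - (w + t *\<^sub>R P v) = P (u0 - t *\<^sub>R v)" by (simp add: diff scaleR u0[symmetric] algebra_simps)
        then have "w + t *\<^sub>R P v \<in> C" unfolding C_def by simp
        then show "norm w \<le> norm (w + t *\<^sub>R P v)" by (rule wmin)
      qed
      have "c * (norm w)\<^sup>2 \<le> 0" using co[of w] perp[of w] r_sym[of "P w" w] by simp
      then have "w = 0" using c by (simp add: mult_le_0_iff)
      then show "f \<in> range P" using u0 by simp
    qed
    then show ?thesis by blast
  qed
  show ?thesis using inj surj by (simp add: bij_def)
qed

end



context chs begin

lemma scC_bl: "bounded_linear (scC J c)"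
proof -
  have "bounded_linear (\<lambda>x. Re c *\<^sub>R x + Im c *\<^sub>R J x)"
    by (intro bounded_linear_add bounded_linear_scaleR_right bounded_linear_compose[OF bounded_linear_scaleR_right J_bl] bounded_linear_ident)
  then show ?thesis unfolding scC_def[abs_def] by simp
qed

lemma shift_bl: "bounded_linear T \<Longrightarrow> bounded_linear (shift J T c)"
  unfolding shift_def by (intro bounded_linear_sub scC_bl)

lemma scC_J: "scC J c (J x) = J (scC J c x)"
  by (simp add: scC_def J_add J_scale)

lemma shift_J: "(\<And>x. T (J x) = J (T x)) \<Longrightarrow> shift J T c (J x) = J (shift J T c x)"
  by (simp add: shift_def J_diff scC_J)

lemma r_scC: "r (scC J c x) y = r x (scC J (cnj c) y)"
  by (simp add: scC_def r_add_left r_add_right r_diff_right r_scale_left r_scale_right r_J)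

lemma r_shift: "(\<And>x y. r (T x) y = r x (S y)) \<Longrightarrow> r (shift J T c x) y = r x (shift J S (cnj c) y)"
  by (simp add: shift_def r_diff_left r_diff_right r_scC)

lemma clin: "linear P \<Longrightarrow> (\<And>x. P (J x) = J (P x)) \<Longrightarrow> P (scC J c x) = scC J c (P x)"
  by (simp add: scC_def linear_add linear_scale)

lemma scC_diff: "scC J c (x - y) = scC J c x - scC J c y"
  by (simp add: scC_def J_diff algebra_simps)

lemma scC_comm: "scC J a (scC J b x) = scC J b (scC J a x)"
  by (simp add: scC_def J_add J_scale J_neg algebra_simps)

lemma shift_comm:
  assumes P: "linear P" and Q: "linear Q" and PJ: "\<And>x. P (J x) = J (P x)" and QJ: "\<And>x. Q (J x) = J (Q x)"
    and PQ: "\<And>x. P (Q x) = Q (P x)"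
  shows "shift J P a (shift J Q b x) = shift J Q b (shift J P a x)"
  unfolding shift_def
  by (simp add: linear_diff[OF P] linear_diff[OF Q] clin[OF P PJ] clin[OF Q QJ] scC_diff PQ scC_comm algebra_simps)

end


theorem theorem2p2:
  fixes J :: "'a::banach \<Rightarrow> 'a" and ip :: "'a \<Rightarrow> 'a \<Rightarrow> complex"
    and n :: nat and T :: "nat \<Rightarrow> 'a \<Rightarrow> 'a" and z :: "nat \<Rightarrow> complex"
  assumes "complex_hilbert J ip"
    and "\<forall>j<n. bounded_clinear_op J (T j)"
    and "doubly_commuting ip n T"
    and "\<forall>j<n. property1 J ip (T j)"
    and "z \<in> taylor_spectrum J n T"
  shows "(\<exists>y::nat \<Rightarrow> 'a. (\<forall>m. norm (y m) = 1) \<and>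
            (\<forall>j<n. (\<lambda>m. adj ip (shift J (T j) (z j)) (y m)) \<longlonglongrightarrow> 0))
         \<and> (\<lambda>j. cnj (z j)) \<in> joint_approx_point_spectrum J n (\<lambda>j. adj ip (T j))"
proof -
  interpret chs J ip by (rule chs.intro) (rule assms(1))
  interpret rb: bounded_bilinear r by (rule r_bb)
  have Tbl: "bounded_linear (T j)" if "j < n" for j
    using assms(2) that unfolding bounded_clinear_op_def by blast
  have Tsc: "T j (scC J c x) = scC J c (T j x)" if "j < n" for j c x
    using assms(2) that unfolding bounded_clinear_op_def by blast
  have TJ: "T j (J x) = J (T j x)" if "j < n" for j x
    using Tsc[OF that, of \<i> x] by (simp add: scC_i)
  have "\<forall>j. \<exists>S. j < n \<longrightarrow> bounded_linear S \<and> (\<forall>x y. r (T j x) y = r x (S y))"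
    using adj_ex Tbl by blast
  from choice[OF this] obtain Ts where Ts: "\<And>j. j < n \<Longrightarrow> bounded_linear (Ts j) \<and> (\<forall>x y. r (T j x) y = r x (Ts j y))"
    by blast
  have Tsbl: "bounded_linear (Ts j)" if "j < n" for j using Ts[OF that] by blast
  have Tsr: "r (T j x) y = r x (Ts j y)" if "j < n" for j x y using Ts[OF that] by blast
  have TsJ: "Ts j (J x) = J (Ts j x)" if "j < n" for j x
    by (rule adj_J[of "T j"]) (use TJ[OF that] Tsr[OF that] in auto)
  have adjT: "adj ip (T j) = Ts j" if "j < n" for j
    by (rule adj_eq) (use TJ[OF that] Tsr[OF that] in auto)
  define A where "A = (\<lambda>j. shift J (T j) (z j))"
  define B where "B = (\<lambda>j. shift J (Ts j) (cnj (z j)))"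
  have Abl: "bounded_linear (A j)" if "j < n" for j unfolding A_def by (rule shift_bl[OF Tbl[OF that]])
  have Bbl: "bounded_linear (B j)" if "j < n" for j unfolding B_def by (rule shift_bl[OF Tsbl[OF that]])
  have linA: "linear (A j)" if "j < n" for j using Abl[OF that] bounded_linear.linear by blast
  have linB: "linear (B j)" if "j < n" for j using Bbl[OF that] bounded_linear.linear by blast
  have rA: "r (A j x) y = r x (B j y)" if "j < n" for j x y
    unfolding A_def B_def by (rule r_shift) (rule Tsr[OF that])
  have adjA: "adj ip (shift J (T j) (z j)) = B j" if "j < n" for j
    unfolding B_def
    by (rule adj_eq) (use shift_J[of "T j", OF TJ[OF that]] r_shift[of "T j" "Ts j", OF Tsr[OF that]] in auto)
  have adjT': "shift J (adj ip (T j)) (cnj (z j)) = B j" if "j < n" for j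
    unfolding B_def adjT[OF that] ..
  have linT: "linear (T j)" if "j < n" for j using Tbl[OF that] bounded_linear.linear by blast
  have linTs: "linear (Ts j)" if "j < n" for j using Tsbl[OF that] bounded_linear.linear by blast
  have commA: "A i (A l x) = A l (A i x)" if "i < n" "l < n" "i \<noteq> l" for i l x
  proof -
    have "T i \<circ> T l = T l \<circ> T i" using assms(3) that unfolding doubly_commuting_def by blast
    then have PQ: "T i (T l x) = T l (T i x)" for x by (metis comp_apply)
    show ?thesis unfolding A_def
      by (rule shift_comm[OF linT[OF that(1)] linT[OF that(2)] TJ[OF that(1)] TJ[OF that(2)]]) (rule PQ)
  qed
  have commB: "B l (A i x) = A i (B l x)" if "i < n" "l < n" "i \<noteq> l" for i l x
  proof -
    have "adj ip (T l) \<circ> T i = T i \<circ> adj ip (T l)" using assms(3) that unfolding doubly_commuting_def by blast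
    then have PQ: "Ts l (T i x) = T i (Ts l x)" for x unfolding adjT[OF that(2)] by (metis comp_apply)
    show ?thesis unfolding A_def B_def
      by (rule shift_comm[OF linTs[OF that(2)] linT[OF that(1)] TsJ[OF that(2)] TJ[OF that(1)]]) (rule PQ)
  qed
  have P1: "\<exists>y. (\<forall>m. norm (y m) = 1) \<and> (\<forall>j<n. (\<lambda>m. B j (y m)) \<longlonglongrightarrow> 0)"
  proof (rule ccontr)
    assume neg: "\<not> ?thesis"
    have bjS: "bij (\<lambda>x. (\<Sum>i\<in>{..<n} - S. A i (B i x)) + (\<Sum>l\<in>S. B l (A l x)))" if S: "S \<subseteq> {..<n}" for S
    proof -
      define Q where "Q x = (\<Sum>i\<in>{..<n} - S. (norm (B i x))\<^sup>2) + (\<Sum>l\<in>S. (norm (A l x))\<^sup>2)" for x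
      have rQ: "r ((\<Sum>i\<in>{..<n} - S. A i (B i x)) + (\<Sum>l\<in>S. B l (A l x))) x = Q x" for x
      proof -
        have "r ((\<Sum>i\<in>{..<n} - S. A i (B i x)) + (\<Sum>l\<in>S. B l (A l x))) x
            = (\<Sum>i\<in>{..<n} - S. r (A i (B i x)) x) + (\<Sum>l\<in>S. r (B l (A l x)) x)"
          by (simp add: r_add_left rb.sum_left)
        also have "\<dots> = Q x" unfolding Q_def
        proof (intro arg_cong2[where f="(+)"] sum.cong refl)
          fix i assume "i \<in> {..<n} - S" then have i: "i < n" by auto
          show "r (A i (B i x)) x = (norm (B i x))\<^sup>2" using rA[OF i, of "B i x" x] by (simp add: r_self)
        next
          fix l assume "l \<in> S" then have l: "l < n" using S by auto
          show "r (B l (A l x)) x = (norm (A l x))\<^sup>2"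
            using rA[OF l, of x "A l x"] r_sym[of "B l (A l x)" x] by (simp add: r_self)
        qed
        finally show ?thesis .
      qed
      have finS: "finite S" using S finite_subset by blast
      have Qhom: "Q (a *\<^sub>R x) = a\<^sup>2 * Q x" for a x
      proof -
        have hB: "(norm (B i (a *\<^sub>R x)))\<^sup>2 = a\<^sup>2 * (norm (B i x))\<^sup>2" if "i \<in> {..<n} - S" for i
          using that linB[of i] by (simp add: linear_scale power_mult_distrib)
        have hA: "(norm (A i (a *\<^sub>R x)))\<^sup>2 = a\<^sup>2 * (norm (A i x))\<^sup>2" if "i \<in> S" for i
          using that S linA[of i] by (auto simp add: linear_scale power_mult_distrib)
        show ?thesis unfolding Q_def using hA hB by (simp add: sum_distrib_left distrib_left)
      qed
      have termB: "(norm (B i x))\<^sup>2 \<le> Q x" if "i \<in> {..<n} - S" for i x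
      proof -
        have "(norm (B i x))\<^sup>2 \<le> (\<Sum>i\<in>{..<n} - S. (norm (B i x))\<^sup>2)"
          by (rule member_le_sum) (use that in auto)
        moreover have "0 \<le> (\<Sum>l\<in>S. (norm (A l x))\<^sup>2)" by (simp add: sum_nonneg)
        ultimately show ?thesis unfolding Q_def by linarith
      qed
      have termA: "(norm (A i x))\<^sup>2 \<le> Q x" if "i \<in> S" for i x
      proof -
        have "(norm (A i x))\<^sup>2 \<le> (\<Sum>l\<in>S. (norm (A l x))\<^sup>2)"
          by (rule member_le_sum) (use that finS in auto)
        moreover have "0 \<le> (\<Sum>i\<in>{..<n} - S. (norm (B i x))\<^sup>2)" by (simp add: sum_nonneg)
        ultimately show ?thesis unfolding Q_def by linarith
      qed
      have small: "norm v < 1 / real (Suc m)" if "(norm v)\<^sup>2 < (1 / real (Suc m))\<^sup>2" for v :: 'a and m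
        using that by (rule power_less_imp_less_base) simp
      have "\<exists>c>0. \<forall>x. c * (norm x)\<^sup>2 \<le> Q x"
      proof (rule ccontr)
        assume nc: "\<not> ?thesis"
        have "\<forall>m. \<exists>y. norm y = 1 \<and> Q y < (1 / real (Suc m))\<^sup>2"
        proof
          fix m
          have pos: "(1 / real (Suc m))\<^sup>2 > 0" by simp
          then obtain x where x: "Q x < (1 / real (Suc m))\<^sup>2 * (norm x)\<^sup>2" using nc by (meson not_le)
          have x0: "x \<noteq> 0"
          proof
            assume "x = 0"
            then have "Q x = 0" using Qhom[of 0 x] by simp
            then show False using x \<open>x = 0\<close> by simp
          qed
          define y where "y = (1 / norm x) *\<^sub>R x"
          have ny: "norm y = 1" unfolding y_def using x0 by simp
          have "Q y = (1 / norm x)\<^sup>2 * Q x" unfolding y_def by (rule Qhom)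
          also have "\<dots> < (1 / norm x)\<^sup>2 * ((1 / real (Suc m))\<^sup>2 * (norm x)\<^sup>2)"
            using x x0 by (intro mult_strict_left_mono) auto
          also have "\<dots> = (1 / real (Suc m))\<^sup>2" using x0 by (simp add: field_simps)
          finally show "\<exists>y. norm y = 1 \<and> Q y < (1 / real (Suc m))\<^sup>2" using ny by blast
        qed
        from choice[OF this] obtain y where y: "\<And>m. norm (y m) = 1" "\<And>m. Q (y m) < (1 / real (Suc m))\<^sup>2"
          by blast
        have "\<forall>j<n. (\<lambda>m. B j (y m)) \<longlonglongrightarrow> 0"
        proof (intro allI impI)
          fix j assume j: "j < n"
          show "(\<lambda>m. B j (y m)) \<longlonglongrightarrow> 0"
          proof (cases "j \<in> S")
            case False
            then have jS: "j \<in> {..<n} - S" using j by auto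
            show ?thesis
            proof (rule LIMSEQ_norm_0)
              fix m show "norm (B j (y m)) < 1 / real (Suc m)"
                using termB[OF jS, of "y m"] y(2)[of m] by (intro small) linarith
            qed
          next
            case True
            have "(\<lambda>m. A j (y m)) \<longlonglongrightarrow> 0"
            proof (rule LIMSEQ_norm_0)
              fix m show "norm (A j (y m)) < 1 / real (Suc m)"
                using termA[OF True, of "y m"] y(2)[of m] by (intro small) linarith
            qed
            then have "(\<lambda>m. shift J (T j) (z j) (y m)) \<longlonglongrightarrow> 0" unfolding A_def by simp
            moreover have "property1 J ip (T j)" using assms(4) j by blast
            ultimately have "(\<lambda>m. adj ip (shift J (T j) (z j)) (y m)) \<longlonglongrightarrow> 0"
              using y(1) unfolding property1_def by blast
            then show ?thesis using adjA[OF j] by simp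
          qed
        qed
        then show False using neg y(1) by blast
      qed
      then obtain c where c: "c > 0" "\<And>x. c * (norm x)\<^sup>2 \<le> Q x" by blast
      have bl: "bounded_linear (\<lambda>x. (\<Sum>i\<in>{..<n} - S. A i (B i x)) + (\<Sum>l\<in>S. B l (A l x)))"
        using S by (intro bounded_linear_add bounded_linear_sum bounded_linear_compose[OF Abl Bbl]
            bounded_linear_compose[OF Bbl Abl]) auto
      show ?thesis
        by (rule coercive_bij[OF bl c(1)]) (simp add: rQ c(2))
    qed
    have "koszul_exact n A" by (rule exact_from_lap[of n A B, OF linA linB commA commB bjS])
    with assms(5) show False unfolding taylor_spectrum_def A_def by simp
  qed
  then obtain y where y1: "\<And>m. norm (y m) = 1" and y2: "\<And>j. j < n \<Longrightarrow> (\<lambda>m. B j (y m)) \<longlonglongrightarrow> 0"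
    by blast
  have part1: "\<forall>j<n. (\<lambda>m. adj ip (shift J (T j) (z j)) (y m)) \<longlonglongrightarrow> 0"
    using y2 adjA by simp
  have part2: "\<forall>j<n. (\<lambda>m. shift J (adj ip (T j)) (cnj (z j)) (y m)) \<longlonglongrightarrow> 0"
    using y2 adjT' by simp
  show ?thesis
    unfolding joint_approx_point_spectrum_def using y1 part1 part2 by blast
qed

end
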